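(* Let $m\in\mathbb{N}_0$ and $n\in\mathbb{N}$, and fix a word pattern of $m$ letters $S$ and $n$ letters $T$ whose last letter is $T$. Then there are integers $c_1,\dots,c_m$, depending only on the pattern and not on $g$, such that for every $g\in\mathcal{H}(\mathbb{D})$ the corresponding $g$-word $L\in W^T_g(m,n)$ satisfies $$L=S_g^mT_g^n+\sum_{j=1}^mc_jS_g^{m-j}T_g^{n+j}.$$
   Context: $\mathcal{H}(\mathbb{D})$ analytic functions on the unit disc. For $g\in\mathcal{H}(\mathbb{D})$: $T_gf(z)=\int_0^zf(\zeta)g'(\zeta)d\zeta$, $S_gf(z)=\int_0^zf'(\zeta)g(\zeta)d\zeta$, with $S_g^0$ the identity. $W^T_g(m,n)$ is the set of products of $m$ factors $S_g$ and $n$ factors $T_g$ (in any order) whose last (rightmost) factor is $T_g$. *)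

theory Defs
  imports "HOL-Complex_Analysis.Complex_Analysis"
begin

text \<open>Operators on functions analytic in the unit disc. Values outside the
disc are irrelevant; we normalise them to 0.
The integral from 0 to z is taken along the segment [0,z].\<close>

definition Tg :: "(complex \<Rightarrow> complex) \<Rightarrow> (complex \<Rightarrow> complex) \<Rightarrow> (complex \<Rightarrow> complex)" where
  "Tg g f = (\<lambda>z. if z \<in> ball 0 1
      then contour_integral (linepath 0 z) (\<lambda>\<zeta>. f \<zeta> * deriv g \<zeta>) else 0)"

definition Sg :: "(complex \<Rightarrow> complex) \<Rightarrow> (complex \<Rightarrow> complex) \<Rightarrow> (complex \<Rightarrow> complex)" where
  "Sg g f = (\<lambda>z. if z \<in> ball 0 1
      then contour_integral (linepath 0 z) (\<lambda>\<zeta>. deriv f \<zeta> * g \<zeta>) else 0)"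

text \<open>A word in the letters S and T is a list of booleans: True = T, False = S.
The list is read left to right as the product is written, so the last
element is the rightmost factor (applied first).\<close>

fun word_op :: "(complex \<Rightarrow> complex) \<Rightarrow> bool list \<Rightarrow> (complex \<Rightarrow> complex) \<Rightarrow> (complex \<Rightarrow> complex)" where
  "word_op g [] f = f"
| "word_op g (b # w) f = (if b then Tg g else Sg g) (word_op g w f)"

end

theory Submission
  imports Defs
begin


lemma prim:
  assumes "F holomorphic_on ball 0 1" "x \<in> ball (0::complex) 1"
  shows "((\<lambda>x. contour_integral (linepath 0 x) F) has_field_derivative F x) (at x)"
proof -
  have "((\<lambda>x. contour_integral (linepath 0 x) F) has_field_derivative F x) (at x within ball 0 1)"
  proof (rule triangle_contour_integrals_convex_primitive)
    show "continuous_on (ball 0 1) F" using assms(1) holomorphic_on_imp_continuous_on by blast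
    show "(0::complex) \<in> ball 0 1" "convex (ball (0::complex) 1)" "x \<in> ball 0 1" using assms by auto
    fix b c assume bc: "b \<in> ball (0::complex) 1" "c \<in> ball (0::complex) 1"
    have s1: "closed_segment 0 b \<subseteq> ball (0::complex) 1" "closed_segment b c \<subseteq> ball (0::complex) 1"
         "closed_segment c 0 \<subseteq> ball (0::complex) 1"
      using bc by (meson centre_in_ball closed_segment_subset convex_ball zero_less_one)+
    have "(F has_contour_integral 0) (linepath 0 b +++ linepath b c +++ linepath c 0)"
      by (rule Cauchy_theorem_convex_simple[OF assms(1)])
         (use s1 in \<open>auto simp: valid_path_join path_image_join\<close>)
    then show "contour_integral (linepath 0 b) F + contour_integral (linepath b c) F +
          contour_integral (linepath c 0) F = 0"
      by (rule has_chain_integral_chain_integral3)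
  qed
  then show ?thesis using at_within_open[of x "ball 0 1"] assms by simp
qed

lemma Tg_deriv:
  assumes "g holomorphic_on ball 0 1" "h holomorphic_on ball 0 1" "z \<in> ball 0 1"
  shows "(Tg g h has_field_derivative h z * deriv g z) (at z)"
proof -
  have "(\<lambda>\<zeta>. h \<zeta> * deriv g \<zeta>) holomorphic_on ball 0 1"
    using assms by (auto intro!: holomorphic_intros)
  from prim[OF this assms(3)] show ?thesis
    by (rule has_field_derivative_transform_within_open[where S="ball 0 1"])
       (use assms in \<open>auto simp: Tg_def\<close>)
qed

lemma Sg_deriv:
  assumes "g holomorphic_on ball 0 1" "h holomorphic_on ball 0 1" "z \<in> ball 0 1"
  shows "(Sg g h has_field_derivative deriv h z * g z) (at z)"
proof -
  have "(\<lambda>\<zeta>. deriv h \<zeta> * g \<zeta>) holomorphic_on ball 0 1"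
    using assms by (auto intro!: holomorphic_intros)
  from prim[OF this assms(3)] show ?thesis
    by (rule has_field_derivative_transform_within_open[where S="ball 0 1"])
       (use assms in \<open>auto simp: Sg_def\<close>)
qed

lemma hol_of_deriv:
  assumes "\<And>z. z \<in> ball 0 1 \<Longrightarrow> (F has_field_derivative D z) (at z)"
  shows "F holomorphic_on ball (0::complex) 1"
  unfolding holomorphic_on_open[OF open_ball] using assms by blast

lemma Tg_hol: "g holomorphic_on ball 0 1 \<Longrightarrow> h holomorphic_on ball 0 1 \<Longrightarrow> Tg g h holomorphic_on ball 0 1"
  by (rule hol_of_deriv, rule Tg_deriv)
lemma Sg_hol: "g holomorphic_on ball 0 1 \<Longrightarrow> h holomorphic_on ball 0 1 \<Longrightarrow> Sg g h holomorphic_on ball 0 1"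
  by (rule hol_of_deriv, rule Sg_deriv)

lemma Tg_0[simp]: "Tg g h 0 = 0" by (simp add: Tg_def)
lemma Sg_0[simp]: "Sg g h 0 = 0" by (simp add: Sg_def)
lemma Tg_out: "z \<notin> ball 0 1 \<Longrightarrow> Tg g h z = 0" by (simp add: Tg_def)
lemma Sg_out: "z \<notin> ball 0 1 \<Longrightarrow> Sg g h z = 0" by (simp add: Sg_def)

lemma uniq_on:
  assumes "\<And>z. z \<in> ball 0 1 \<Longrightarrow> (F has_field_derivative D z) (at z)"
    "\<And>z. z \<in> ball 0 1 \<Longrightarrow> (G has_field_derivative D z) (at z)"
    "F 0 = G 0" "z \<in> ball (0::complex) 1"
  shows "F z = G z"
proof -
  have "\<exists>c. \<forall>x\<in>ball 0 1. (\<lambda>x. F x - G x) x = c"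
  proof (rule has_field_derivative_zero_constant)
    fix x assume x: "x \<in> ball (0::complex) 1"
    have "((\<lambda>x. F x - G x) has_field_derivative D x - D x) (at x)"
      using assms(1,2)[OF x] by (intro derivative_intros)
    then show "((\<lambda>x. F x - G x) has_field_derivative 0) (at x within ball 0 1)"
      by (simp add: has_field_derivative_at_within)
  qed simp
  then obtain c where "\<forall>x\<in>ball 0 1. F x - G x = c" by auto
  then have "F z - G z = F 0 - G 0" using assms(4) by auto
  then show ?thesis using assms(3) by simp
qed

lemma uniq:
  assumes "\<And>z. z \<in> ball 0 1 \<Longrightarrow> (F has_field_derivative D z) (at z)"
    "\<And>z. z \<in> ball 0 1 \<Longrightarrow> (G has_field_derivative D z) (at z)"
    "F 0 = G 0" "\<And>z. z \<notin> ball (0::complex) 1 \<Longrightarrow> F z = G z"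
  shows "F = G"
proof
  fix z show "F z = G z"
    using uniq_on[OF assms(1,2,3)] assms(4) by (cases "z \<in> ball 0 1") auto
qed

lemma Tg_lin:
  assumes g: "g holomorphic_on ball 0 1" and X: "X holomorphic_on ball 0 1" and Y: "Y holomorphic_on ball 0 1"
  shows "Tg g (\<lambda>z. k * X z + Y z) = (\<lambda>z. k * Tg g X z + Tg g Y z)"
proof (rule uniq)
  have XY: "(\<lambda>z. k * X z + Y z) holomorphic_on ball 0 1" using X Y by (auto intro!: holomorphic_intros)
  fix z :: complex assume z: "z \<in> ball 0 1"
  show "(Tg g (\<lambda>z. k * X z + Y z) has_field_derivative (k * X z + Y z) * deriv g z) (at z)"
    using Tg_deriv[OF g XY z] .
  show "((\<lambda>z. k * Tg g X z + Tg g Y z) has_field_derivative (k * X z + Y z) * deriv g z) (at z)"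
    using Tg_deriv[OF g X z] Tg_deriv[OF g Y z]
    by (auto intro!: derivative_eq_intros simp: algebra_simps)
qed (auto simp: Tg_out)

lemma Sg_lin:
  assumes g: "g holomorphic_on ball 0 1" and X: "X holomorphic_on ball 0 1" and Y: "Y holomorphic_on ball 0 1"
  shows "Sg g (\<lambda>z. k * X z + Y z) = (\<lambda>z. k * Sg g X z + Sg g Y z)"
proof (rule uniq)
  have XY: "(\<lambda>z. k * X z + Y z) holomorphic_on ball 0 1" using X Y by (auto intro!: holomorphic_intros)
  fix z :: complex assume z: "z \<in> ball 0 1"
  have dX: "(X has_field_derivative deriv X z) (at z)" and dY: "(Y has_field_derivative deriv Y z) (at z)"
    using X Y z by (auto intro!: DERIV_deriv_iff_field_differentiable[THEN iffD2] holomorphic_on_imp_differentiable_at)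
  have "deriv (\<lambda>z. k * X z + Y z) z = k * deriv X z + deriv Y z"
    by (rule DERIV_imp_deriv) (use dX dY in \<open>auto intro!: derivative_eq_intros\<close>)
  then show "(Sg g (\<lambda>z. k * X z + Y z) has_field_derivative (k * deriv X z + deriv Y z) * g z) (at z)"
    using Sg_deriv[OF g XY z] by simp
  show "((\<lambda>z. k * Sg g X z + Sg g Y z) has_field_derivative (k * deriv X z + deriv Y z) * g z) (at z)"
    using Sg_deriv[OF g X z] Sg_deriv[OF g Y z]
    by (auto intro!: derivative_eq_intros simp: algebra_simps)
qed (auto simp: Sg_out)

lemma Tg_scale:
  assumes g: "g holomorphic_on ball 0 1" and X: "X holomorphic_on ball 0 1"
  shows "Tg g (\<lambda>z. k * X z) = (\<lambda>z. k * Tg g X z)"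
proof -
  have "Tg g (\<lambda>_. 0) = (\<lambda>_. 0)" unfolding Tg_def mult_zero_left contour_integral_0 by simp
  then show ?thesis using Tg_lin[OF g X, of "\<lambda>_. 0" k] by simp
qed

lemma Sg_scale:
  assumes g: "g holomorphic_on ball 0 1" and X: "X holomorphic_on ball 0 1"
  shows "Sg g (\<lambda>z. k * X z) = (\<lambda>z. k * Sg g X z)"
proof -
  have "Sg g (\<lambda>_. 0) = (\<lambda>_. 0)" unfolding Sg_def deriv_const mult_zero_left contour_integral_0 by simp
  then show ?thesis using Sg_lin[OF g X, of "\<lambda>_. 0" k] by simp
qed

lemma SplusT:
  assumes g: "g holomorphic_on ball 0 1" and h: "h holomorphic_on ball 0 1" and h0: "h 0 = 0"
    and z: "z \<in> ball 0 1"
  shows "Sg g h z = g z * h z - Tg g h z"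
proof -
  have "Sg g h z + Tg g h z = g z * h z"
  proof (rule uniq_on[OF _ _ _ z])
    fix z assume z: "z \<in> ball (0::complex) 1"
    have dg: "(g has_field_derivative deriv g z) (at z)" and dh: "(h has_field_derivative deriv h z) (at z)"
      using g h z by (auto intro!: DERIV_deriv_iff_field_differentiable[THEN iffD2] holomorphic_on_imp_differentiable_at)
    show "((\<lambda>z. Sg g h z + Tg g h z) has_field_derivative deriv h z * g z + h z * deriv g z) (at z)"
      using Sg_deriv[OF g h z] Tg_deriv[OF g h z] by (auto intro!: derivative_eq_intros)
    show "((\<lambda>z. g z * h z) has_field_derivative deriv h z * g z + h z * deriv g z) (at z)"
      using dg dh by (auto intro!: derivative_eq_intros simp: algebra_simps)
  qed (simp add: h0)
  then show ?thesis by (simp add: algebra_simps)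
qed

lemma comm:
  assumes g: "g holomorphic_on ball 0 1" and h: "h holomorphic_on ball 0 1" and h0: "h 0 = 0"
  shows "Tg g (Sg g h) = (\<lambda>z. Sg g (Tg g h) z - Tg g (Tg g h) z)"
proof (rule uniq)
  fix z assume z: "z \<in> ball (0::complex) 1"
  show "(Tg g (Sg g h) has_field_derivative Sg g h z * deriv g z) (at z)"
    using Tg_deriv[OF g Sg_hol[OF g h] z] .
  have dT: "deriv (Tg g h) z = h z * deriv g z"
    by (rule DERIV_imp_deriv[OF Tg_deriv[OF g h z]])
  show "((\<lambda>z. Sg g (Tg g h) z - Tg g (Tg g h) z) has_field_derivative Sg g h z * deriv g z) (at z)"
    using Sg_deriv[OF g Tg_hol[OF g h] z] Tg_deriv[OF g Tg_hol[OF g h] z]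
    by (auto intro!: derivative_eq_intros simp: dT SplusT[OF g h h0 z] algebra_simps)
qed (auto simp: Tg_out Sg_out)



lemma Tpow_hol: "g holomorphic_on ball 0 1 \<Longrightarrow> h holomorphic_on ball 0 1 \<Longrightarrow> (Tg g ^^ b) h holomorphic_on ball 0 1"
  by (induction b) (auto intro: Tg_hol)
lemma Spow_hol: "g holomorphic_on ball 0 1 \<Longrightarrow> h holomorphic_on ball 0 1 \<Longrightarrow> (Sg g ^^ b) h holomorphic_on ball 0 1"
  by (induction b) (auto intro: Sg_hol)
lemma Tpow_0: "h 0 = 0 \<Longrightarrow> (Tg g ^^ b) h 0 = 0"
  by (cases b) auto
lemma Spow_0: "h 0 = 0 \<Longrightarrow> (Sg g ^^ b) h 0 = 0"
  by (cases b) auto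

fun NF :: "(complex \<Rightarrow> complex) \<Rightarrow> nat \<Rightarrow> nat \<Rightarrow> (nat \<Rightarrow> int) \<Rightarrow> (complex \<Rightarrow> complex) \<Rightarrow> (complex \<Rightarrow> complex)" where
  "NF g 0 b c h = (\<lambda>z. of_int (c 0) * (Tg g ^^ b) h z)"
| "NF g (Suc a) b c h = (\<lambda>z. of_int (c 0) * (Sg g ^^ Suc a) ((Tg g ^^ b) h) z + NF g a (Suc b) (\<lambda>j. c (Suc j)) h z)"

lemma NF_hol: "g holomorphic_on ball 0 1 \<Longrightarrow> h holomorphic_on ball 0 1 \<Longrightarrow> NF g a b c h holomorphic_on ball 0 1"
proof (induction a arbitrary: b c)
  case 0 then show ?case by (auto intro!: holomorphic_intros Tpow_hol)
next
  case (Suc a) then show ?case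
    by (simp only: NF.simps) (intro holomorphic_intros Spow_hol Tpow_hol Suc.IH; simp)
qed

lemma NF_add: "NF g a b c h z + NF g a b d h z = NF g a b (\<lambda>j. c j + d j) h z"
  by (induction a arbitrary: b c d) (auto simp: algebra_simps)
lemma NF_scale: "of_int k * NF g a b c h z = NF g a b (\<lambda>j. k * c j) h z"
  by (induction a arbitrary: b c) (auto simp: algebra_simps)
lemma NF_diff: "NF g a b c h z - NF g a b d h z = NF g a b (\<lambda>j. c j - d j) h z"
  by (induction a arbitrary: b c d) (auto simp: algebra_simps)
lemma NF_zero: "NF g a b (\<lambda>_. 0) h = (\<lambda>_. 0)"
  by (induction a arbitrary: b) auto
lemma NF_delta: "NF g a b (\<lambda>j. if j = 0 then 1 else 0) h = (Sg g ^^ a) ((Tg g ^^ b) h)"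
  by (cases a) (auto simp: NF_zero)
lemma NF_shift: "NF g a (Suc b) c h = NF g (Suc a) b (case_nat 0 c) h"
  by simp

definition cut :: "nat \<Rightarrow> (nat \<Rightarrow> int) \<Rightarrow> nat \<Rightarrow> int" where
  "cut a c = (\<lambda>j. if j \<le> a then c j else 0)"

lemma L1:
  assumes g: "g holomorphic_on ball 0 1" and h: "h holomorphic_on ball 0 1"
  shows "Sg g (NF g a b c h) = NF g (Suc a) b (cut a c) h"
proof (induction a arbitrary: b c)
  case 0
  have "Sg g (NF g 0 b c h) = (\<lambda>z. of_int (c 0) * Sg g ((Tg g ^^ b) h) z)"
    by (simp only: NF.simps) (rule Sg_scale[OF g Tpow_hol[OF g h]])
  then show ?case by (simp add: cut_def)
next
  case (Suc a)
  have "Sg g (NF g (Suc a) b c h) = (\<lambda>z. of_int (c 0) * Sg g ((Sg g ^^ Suc a) ((Tg g ^^ b) h)) z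
      + Sg g (NF g a (Suc b) (\<lambda>j. c (Suc j)) h) z)"
    by (simp only: NF.simps) (rule Sg_lin[OF g Spow_hol[OF g Tpow_hol[OF g h]] NF_hol[OF g h]])
  also have "\<dots> = NF g (Suc (Suc a)) b (cut (Suc a) c) h"
    using Suc.IH[of "Suc b" "\<lambda>j. c (Suc j)"]
    by (simp add: cut_def)
  finally show ?case .
qed

lemma L2:
  "\<exists>c'. c' 0 = c 0 \<and> (\<forall>g h b. g holomorphic_on ball 0 1 \<longrightarrow> h holomorphic_on ball 0 1 \<longrightarrow> h 0 = 0 \<longrightarrow>
      Tg g (NF g a b c h) = NF g a (Suc b) c' h)"
proof (induction a arbitrary: c)
  case 0
  show ?case
  proof (intro exI conjI allI impI)
    fix g h b assume g: "g holomorphic_on ball 0 1" and h: "h holomorphic_on ball 0 1"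
    show "Tg g (NF g 0 b c h) = NF g 0 (Suc b) c h"
      by (simp only: NF.simps) (simp add: Tg_scale[OF g Tpow_hol[OF g h]])
  qed simp
next
  case (Suc a)
  define \<delta> :: "nat \<Rightarrow> int" where "\<delta> = (\<lambda>j. if j = 0 then 1 else 0)"
  obtain e where e0: "e 0 = 1" and e: "\<And>g h b. g holomorphic_on ball 0 1 \<Longrightarrow> h holomorphic_on ball 0 1 \<Longrightarrow> h 0 = 0 \<Longrightarrow>
      Tg g (NF g a b \<delta> h) = NF g a (Suc b) e h"
    using Suc.IH[of \<delta>] unfolding \<delta>_def by auto
  obtain e2 where e2: "\<And>g h b. g holomorphic_on ball 0 1 \<Longrightarrow> h holomorphic_on ball 0 1 \<Longrightarrow> h 0 = 0 \<Longrightarrow>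
      Tg g (NF g a b e h) = NF g a (Suc b) e2 h"
    using Suc.IH[of e] by auto
  obtain r where r: "\<And>g h b. g holomorphic_on ball 0 1 \<Longrightarrow> h holomorphic_on ball 0 1 \<Longrightarrow> h 0 = 0 \<Longrightarrow>
      Tg g (NF g a b (\<lambda>j. c (Suc j)) h) = NF g a (Suc b) r h"
    using Suc.IH[of "\<lambda>j. c (Suc j)"] by auto
  define E where "E = (\<lambda>j. cut a e j - case_nat 0 e2 j)"
  show ?case
  proof (intro exI[of _ "\<lambda>j. c 0 * E j + case_nat 0 r j"] conjI allI impI)
    show "c 0 * E 0 + case_nat 0 r 0 = c 0" by (simp add: E_def cut_def e0)
    fix g h b assume g: "g holomorphic_on ball 0 1" and h: "h holomorphic_on ball 0 1" and h0: "h 0 = 0"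
    define X where "X = (Sg g ^^ a) ((Tg g ^^ b) h)"
    have Xh: "X holomorphic_on ball 0 1" unfolding X_def by (intro Spow_hol Tpow_hol g h)
    have X0: "X 0 = 0" unfolding X_def by (intro Spow_0 Tpow_0 h0)
    have TX: "Tg g X = NF g a (Suc b) e h"
      using e[OF g h h0, of b] unfolding X_def \<delta>_def NF_delta .
    have TS: "Tg g ((Sg g ^^ Suc a) ((Tg g ^^ b) h)) = NF g (Suc a) (Suc b) E h"
    proof -
      have "Tg g ((Sg g ^^ Suc a) ((Tg g ^^ b) h)) = Tg g (Sg g X)" by (simp add: X_def)
      also have "\<dots> = (\<lambda>z. Sg g (Tg g X) z - Tg g (Tg g X) z)" by (rule comm[OF g Xh X0])
      also have "\<dots> = (\<lambda>z. NF g (Suc a) (Suc b) (cut a e) h z - NF g (Suc a) (Suc b) (case_nat 0 e2) h z)"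
        unfolding TX L1[OF g h] e2[OF g h h0] NF_shift[of g a "Suc b" e2] ..
      also have "\<dots> = NF g (Suc a) (Suc b) E h"
        unfolding NF_diff E_def ..
      finally show ?thesis .
    qed
    have "Tg g (NF g (Suc a) b c h) = (\<lambda>z. of_int (c 0) * Tg g ((Sg g ^^ Suc a) ((Tg g ^^ b) h)) z
        + Tg g (NF g a (Suc b) (\<lambda>j. c (Suc j)) h) z)"
      by (simp only: NF.simps) (rule Tg_lin[OF g Spow_hol[OF g Tpow_hol[OF g h]] NF_hol[OF g h]])
    also have "\<dots> = (\<lambda>z. of_int (c 0) * NF g (Suc a) (Suc b) E h z + NF g (Suc a) (Suc b) (case_nat 0 r) h z)"
      unfolding TS r[OF g h h0] NF_shift[of g a "Suc b" r] ..
    also have "\<dots> = NF g (Suc a) (Suc b) (\<lambda>j. c 0 * E j + case_nat 0 r j) h"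
      unfolding NF_scale NF_add ..
    finally show "Tg g (NF g (Suc a) b c h) = NF g (Suc a) (Suc b) (\<lambda>j. c 0 * E j + case_nat 0 r j) h" .
  qed
qed



lemma word_NF:
  "length (filter (\<lambda>b. \<not> b) w) = m \<Longrightarrow> length (filter (\<lambda>b. b) w) = k \<Longrightarrow>
   \<exists>c. c 0 = 1 \<and> (\<forall>g h. g holomorphic_on ball 0 1 \<longrightarrow> h holomorphic_on ball 0 1 \<longrightarrow> h 0 = 0 \<longrightarrow>
      word_op g w h = NF g m k c h)"
proof (induction w arbitrary: m k)
  case Nil
  then show ?case by (intro exI[of _ "\<lambda>_. 1"]) auto
next
  case (Cons b w)
  show ?case
  proof (cases b)
    case True
    with Cons.prems obtain k' where k: "k = Suc k'" and m: "length (filter (\<lambda>b. \<not> b) w) = m"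
      and k': "length (filter (\<lambda>b. b) w) = k'" by auto
    obtain c where c0: "c 0 = 1" and c: "\<And>g h. g holomorphic_on ball 0 1 \<Longrightarrow> h holomorphic_on ball 0 1 \<Longrightarrow> h 0 = 0 \<Longrightarrow>
      word_op g w h = NF g m k' c h" using Cons.IH[OF m k'] by auto
    obtain c' where c'0: "c' 0 = c 0" and c': "\<And>g h b. g holomorphic_on ball 0 1 \<Longrightarrow> h holomorphic_on ball 0 1 \<Longrightarrow> h 0 = 0 \<Longrightarrow>
      Tg g (NF g m b c h) = NF g m (Suc b) c' h" using L2[of c m] by auto
    show ?thesis
      by (intro exI[of _ c'] conjI allI impI) (auto simp: c'0 c0 True k c c')
  next
    case False
    with Cons.prems obtain m' where m: "m = Suc m'" and m': "length (filter (\<lambda>b. \<not> b) w) = m'"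
      and k: "length (filter (\<lambda>b. b) w) = k" by auto
    obtain c where c0: "c 0 = 1" and c: "\<And>g h. g holomorphic_on ball 0 1 \<Longrightarrow> h holomorphic_on ball 0 1 \<Longrightarrow> h 0 = 0 \<Longrightarrow>
      word_op g w h = NF g m' k c h" using Cons.IH[OF m' k] by auto
    show ?thesis
      by (intro exI[of _ "cut m' c"] conjI allI impI) (auto simp: c0 cut_def False m c L1)
  qed
qed

lemma NF_sum: "NF g a b c h z = (\<Sum>j\<le>a. of_int (c j) * (Sg g ^^ (a - j)) ((Tg g ^^ (b + j)) h) z)"
proof (induction a arbitrary: b c)
  case 0 then show ?case by simp
next
  case (Suc a) then show ?case
    by (simp add: sum.atMost_Suc_shift del: funpow.simps sum.atMost_Suc)
qed

lemma word_op_snoc: "word_op g (xs @ [x]) f = word_op g xs (word_op g [x] f)"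
  by (induction xs) auto

theorem proposition3p7:
  fixes m n :: nat and w :: "bool list"
  assumes "n \<ge> 1"
    and "length (filter (\<lambda>b. \<not> b) w) = m"
    and "length (filter (\<lambda>b. b) w) = n"
    and "w \<noteq> []" and "last w = True"
  shows "\<exists>c :: nat \<Rightarrow> int. \<forall>g. g holomorphic_on ball 0 1 \<longrightarrow>
           (\<forall>f. f holomorphic_on ball 0 1 \<longrightarrow> (\<forall>z \<in> ball 0 1.
              word_op g w f z =
                ((Sg g ^^ m) ((Tg g ^^ n) f)) z
                + (\<Sum>j = 1..m. of_int (c j) * ((Sg g ^^ (m - j)) ((Tg g ^^ (n + j)) f)) z)))"
proof -
  define w' where "w' = butlast w"
  have w: "w = w' @ [True]" unfolding w'_def using assms(4,5) append_butlast_last_id by metis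
  have m: "length (filter (\<lambda>b. \<not> b) w') = m" using assms(2) w by simp
  have k: "length (filter (\<lambda>b. b) w') = n - 1" using assms(3) w by simp
  obtain c where c0: "c 0 = 1" and c: "\<And>g h. g holomorphic_on ball 0 1 \<Longrightarrow> h holomorphic_on ball 0 1 \<Longrightarrow> h 0 = 0 \<Longrightarrow>
      word_op g w' h = NF g m (n - 1) c h" using word_NF[OF m k] by auto
  show ?thesis
  proof (intro exI[of _ c] allI impI ballI)
    fix g f z assume g: "g holomorphic_on ball 0 1" and f: "f holomorphic_on ball 0 1" and z: "z \<in> ball (0::complex) 1"
    have pw: "(Tg g ^^ (n - 1 + j)) (Tg g f) = (Tg g ^^ (n + j)) f" for j
    proof -
      have "(Tg g ^^ (n - 1 + j)) (Tg g f) = (Tg g ^^ Suc (n - 1 + j)) f"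
        by (simp only: funpow_Suc_right o_apply)
      also have "Suc (n - 1 + j) = n + j" using assms(1) by simp
      finally show ?thesis .
    qed
    have "word_op g w f z = NF g m (n - 1) c (Tg g f) z"
      using c[OF g Tg_hol[OF g f] Tg_0] by (simp add: w word_op_snoc)
    also have "\<dots> = (\<Sum>j\<le>m. of_int (c j) * (Sg g ^^ (m - j)) ((Tg g ^^ (n + j)) f) z)"
      unfolding NF_sum pw ..
    also have "\<dots> = ((Sg g ^^ m) ((Tg g ^^ n) f)) z
                + (\<Sum>j = 1..m. of_int (c j) * ((Sg g ^^ (m - j)) ((Tg g ^^ (n + j)) f)) z)"
      by (simp add: atMost_atLeast0 sum.atLeast_Suc_atMost c0)
    finally show "word_op g w f z = ((Sg g ^^ m) ((Tg g ^^ n) f)) z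
                + (\<Sum>j = 1..m. of_int (c j) * ((Sg g ^^ (m - j)) ((Tg g ^^ (n + j)) f)) z)" .
  qed
qed

end
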